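(* Let $\mathcal{L}=(\mathrm{Fm},\vdash)$ be a logic. 1. If properties $\wedge_P$, $\vee_P$ and $\neg_W$ hold for $\mathcal{L}$, then $\neg\varphi\vee\neg\psi\vdash\neg(\varphi\wedge\psi)$ for all $\varphi,\psi\in\mathrm{Fm}$. 2. If in addition property $\neg_{Il}$ holds for $\mathcal{L}$, then $\neg(\varphi\wedge\psi)\vdash\neg\varphi\vee\neg\psi$ for all $\varphi,\psi\in\mathrm{Fm}$.
   Context: A logic is a pair $\mathcal{L}=(\mathrm{Fm},\vdash)$ where $\mathrm{Fm}$ is the term (formula) algebra in some signature over a set of propositional variables and $\vdash\subseteq\mathcal{P}(\mathrm{Fm})\times\mathrm{Fm}$ is a consequence relation: (a) $\varphi\in\Gamma$ implies $\Gamma\vdash\varphi$; (b) $\Gamma\vdash\varphi$ and $\Gamma\subseteq\Delta$ imply $\Delta\vdash\varphi$; (c) if $\Delta\vdash\varphi$ and $\Gamma\vdash\psi$ for all $\psi\in\Delta$, then $\Gamma\vdash\varphi$. Write $Cn(\Gamma)=\{\psi\mid\Gamma\vdash\psi\}$, $Cn(\varphi)=Cn(\{\varphi\})$, $Cn(\Gamma,\varphi)=Cn(\Gamma\cup\{\varphi\})$, and $\varphi\vdash\psi$ for $\{\varphi\}\vdash\psi$. Property $\wedge_P$: there is a binary term $x\wedge y$ with $Cn(\varphi\wedge\psi)=Cn(\{\varphi,\psi\})$ for all $\varphi,\psi$. Property $\vee_P$: there is a binary term $x\vee y$ with $Cn(\varphi\vee\psi)=Cn(\varphi)\cap Cn(\psi)$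 for all $\varphi,\psi$. Property $\neg_W$: there is a unary term $\neg x$ such that $\psi\in Cn(\varphi)$ implies $\neg\varphi\in Cn(\neg\psi)$ for all $\varphi,\psi$. For a logic with $\neg_W$ (for the term $\neg$), property $\neg_{Il}$: $Cn(\varphi)\subseteq Cn(\neg\neg\varphi)$ for all $\varphi$. *)

theory Defs
  imports Main
begin

datatype ('v, 's) trm = Var 'v | Fn 's "('v, 's) trm list"

fun wf_trm :: "('s \<Rightarrow> nat) \<Rightarrow> ('v, 's) trm \<Rightarrow> bool" where
  "wf_trm ar (Var v) = True"
| "wf_trm ar (Fn f ts) = (length ts = ar f \<and> (\<forall>t\<in>set ts. wf_trm ar t))"

definition Fm :: "('s \<Rightarrow> nat) \<Rightarrow> ('v, 's) trm set" where
  "Fm ar = {t. wf_trm ar t}"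

fun vars :: "('v, 's) trm \<Rightarrow> 'v set" where
  "vars (Var v) = {v}"
| "vars (Fn f ts) = (\<Union>t\<in>set ts. vars t)"

fun subst :: "('v \<Rightarrow> ('v, 's) trm) \<Rightarrow> ('v, 's) trm \<Rightarrow> ('v, 's) trm" where
  "subst \<sigma> (Var v) = \<sigma> v"
| "subst \<sigma> (Fn f ts) = Fn f (map (subst \<sigma>) ts)"

definition bin_term :: "('s \<Rightarrow> nat) \<Rightarrow> 'v \<Rightarrow> 'v \<Rightarrow> ('v, 's) trm \<Rightarrow> bool" where
  "bin_term ar x y t \<longleftrightarrow> x \<noteq> y \<and> t \<in> Fm ar \<and> vars t \<subseteq> {x, y}"

definition app2 :: "'v \<Rightarrow> 'v \<Rightarrow> ('v, 's) trm \<Rightarrow> ('v, 's) trm \<Rightarrow> ('v, 's) trm \<Rightarrow> ('v, 's) trm" where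
  "app2 x y t \<phi> \<psi> = subst (\<lambda>v. if v = x then \<phi> else if v = y then \<psi> else Var v) t"

definition un_term :: "('s \<Rightarrow> nat) \<Rightarrow> 'v \<Rightarrow> ('v, 's) trm \<Rightarrow> bool" where
  "un_term ar x t \<longleftrightarrow> t \<in> Fm ar \<and> vars t \<subseteq> {x}"

definition app1 :: "'v \<Rightarrow> ('v, 's) trm \<Rightarrow> ('v, 's) trm \<Rightarrow> ('v, 's) trm" where
  "app1 x t \<phi> = subst (\<lambda>v. if v = x then \<phi> else Var v) t"

text \<open>A logic (Fm ar, D): D is a consequence relation on Fm ar.\<close>
definition logic :: "('s \<Rightarrow> nat) \<Rightarrow> (('v, 's) trm set \<Rightarrow> ('v, 's) trm \<Rightarrow> bool) \<Rightarrow> bool" where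
  "logic ar D \<longleftrightarrow>
     (\<forall>\<Gamma> \<phi>. D \<Gamma> \<phi> \<longrightarrow> \<Gamma> \<subseteq> Fm ar \<and> \<phi> \<in> Fm ar) \<and>
     (\<forall>\<Gamma> \<phi>. \<Gamma> \<subseteq> Fm ar \<and> \<phi> \<in> \<Gamma> \<longrightarrow> D \<Gamma> \<phi>) \<and>
     (\<forall>\<Gamma> \<Delta> \<phi>. D \<Gamma> \<phi> \<and> \<Gamma> \<subseteq> \<Delta> \<and> \<Delta> \<subseteq> Fm ar \<longrightarrow> D \<Delta> \<phi>) \<and>
     (\<forall>\<Gamma> \<Delta> \<phi>. \<Gamma> \<subseteq> Fm ar \<and> D \<Delta> \<phi> \<and> (\<forall>\<psi>\<in>\<Delta>. D \<Gamma> \<psi>) \<longrightarrow> D \<Gamma> \<phi>)"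

definition Cn :: "('s \<Rightarrow> nat) \<Rightarrow> (('v, 's) trm set \<Rightarrow> ('v, 's) trm \<Rightarrow> bool) \<Rightarrow> ('v, 's) trm set \<Rightarrow> ('v, 's) trm set" where
  "Cn ar D \<Gamma> = {\<psi> \<in> Fm ar. D \<Gamma> \<psi>}"

definition conj_P where
  "conj_P ar D x y t \<longleftrightarrow> bin_term ar x y t \<and>
     (\<forall>\<phi>\<in>Fm ar. \<forall>\<psi>\<in>Fm ar. Cn ar D {app2 x y t \<phi> \<psi>} = Cn ar D {\<phi>, \<psi>})"

definition disj_P where
  "disj_P ar D x y t \<longleftrightarrow> bin_term ar x y t \<and>
     (\<forall>\<phi>\<in>Fm ar. \<forall>\<psi>\<in>Fm ar. Cn ar D {app2 x y t \<phi> \<psi>} = Cn ar D {\<phi>} \<inter> Cn ar D {\<psi>})"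

definition neg_W where
  "neg_W ar D x t \<longleftrightarrow> un_term ar x t \<and>
     (\<forall>\<phi>\<in>Fm ar. \<forall>\<psi>\<in>Fm ar. \<psi> \<in> Cn ar D {\<phi>} \<longrightarrow> app1 x t \<phi> \<in> Cn ar D {app1 x t \<psi>})"

definition neg_Il where
  "neg_Il ar D x t \<longleftrightarrow> (\<forall>\<phi>\<in>Fm ar. Cn ar D {\<phi>} \<subseteq> Cn ar D {app1 x t (app1 x t \<phi>)})"

end

theory Submission
  imports Defs
begin

lemma wf_subst: "wf_trm ar t \<Longrightarrow> (\<And>v. v \<in> vars t \<Longrightarrow> wf_trm ar (\<sigma> v)) \<Longrightarrow> wf_trm ar (subst \<sigma> t)"
  by (induction t) auto

lemma app2_Fm: "bin_term ar x y t \<Longrightarrow> a \<in> Fm ar \<Longrightarrow> b \<in> Fm ar \<Longrightarrow> app2 x y t a b \<in> Fm ar"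
  unfolding bin_term_def app2_def Fm_def by (auto intro!: wf_subst)

lemma app1_Fm: "un_term ar x t \<Longrightarrow> a \<in> Fm ar \<Longrightarrow> app1 x t a \<in> Fm ar"
  unfolding un_term_def app1_def Fm_def by (auto intro!: wf_subst)

lemma L_refl: "logic ar D \<Longrightarrow> \<Gamma> \<subseteq> Fm ar \<Longrightarrow> a \<in> \<Gamma> \<Longrightarrow> D \<Gamma> a"
  unfolding logic_def by meson

lemma L_fm: "logic ar D \<Longrightarrow> D \<Gamma> a \<Longrightarrow> \<Gamma> \<subseteq> Fm ar \<and> a \<in> Fm ar"
  unfolding logic_def by meson

lemma L_cut: "logic ar D \<Longrightarrow> \<Gamma> \<subseteq> Fm ar \<Longrightarrow> D \<Delta> a \<Longrightarrow> (\<forall>b\<in>\<Delta>. D \<Gamma> b) \<Longrightarrow> D \<Gamma> a"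
  unfolding logic_def by meson

lemma L_trans: "logic ar D \<Longrightarrow> D {a} b \<Longrightarrow> D {b} c \<Longrightarrow> D {a} c"
  using L_cut[of ar D "{a}" "{b}" c] L_fm[of ar D "{a}" b] by blast

lemma Cn_mem: "\<psi> \<in> Cn ar D \<Gamma> \<longleftrightarrow> \<psi> \<in> Fm ar \<and> D \<Gamma> \<psi>"
  unfolding Cn_def by blast

lemma Cn_eqD: "Cn ar D A = Cn ar D B \<Longrightarrow> x \<in> Fm ar \<Longrightarrow> D B x \<Longrightarrow> D A x"
  unfolding Cn_def by (metis (mono_tags, lifting) mem_Collect_eq)

lemma Cn_eqD2: "Cn ar D A = Cn ar D B \<inter> Cn ar D E \<Longrightarrow> x \<in> Fm ar \<Longrightarrow> D B x \<Longrightarrow> D E x \<Longrightarrow> D A x"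
  unfolding Cn_def by (metis (mono_tags, lifting) IntI mem_Collect_eq)

lemma Cn_eqD3: "Cn ar D A = Cn ar D B \<inter> Cn ar D E \<Longrightarrow> x \<in> Fm ar \<Longrightarrow> D A x \<Longrightarrow> D B x \<and> D E x"
  unfolding Cn_def by (metis (mono_tags, lifting) IntE mem_Collect_eq)

theorem lemma2p1:
  fixes ar :: "'s \<Rightarrow> nat" and D :: "('v, 's) trm set \<Rightarrow> ('v, 's) trm \<Rightarrow> bool"
  assumes "logic ar D"
    and "conj_P ar D x1 y1 c"
    and "disj_P ar D x2 y2 d"
    and "neg_W ar D x3 n"
  shows "(\<forall>\<phi>\<in>Fm ar. \<forall>\<psi>\<in>Fm ar.
            D {app2 x2 y2 d (app1 x3 n \<phi>) (app1 x3 n \<psi>)} (app1 x3 n (app2 x1 y1 c \<phi> \<psi>)))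
       \<and> (neg_Il ar D x3 n \<longrightarrow>
          (\<forall>\<phi>\<in>Fm ar. \<forall>\<psi>\<in>Fm ar.
            D {app1 x3 n (app2 x1 y1 c \<phi> \<psi>)} (app2 x2 y2 d (app1 x3 n \<phi>) (app1 x3 n \<psi>))))"
proof -
  note L = assms(1)
  have cb: "bin_term ar x1 y1 c" and cc: "\<And>a b. a \<in> Fm ar \<Longrightarrow> b \<in> Fm ar \<Longrightarrow>
      Cn ar D {app2 x1 y1 c a b} = Cn ar D {a, b}"
    using assms(2) unfolding conj_P_def by auto
  have db: "bin_term ar x2 y2 d" and dd: "\<And>a b. a \<in> Fm ar \<Longrightarrow> b \<in> Fm ar \<Longrightarrow>
      Cn ar D {app2 x2 y2 d a b} = Cn ar D {a} \<inter> Cn ar D {b}"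
    using assms(3) unfolding disj_P_def by auto
  have nb: "un_term ar x3 n" and nn: "\<And>a b. a \<in> Fm ar \<Longrightarrow> b \<in> Fm ar \<Longrightarrow> D {a} b \<Longrightarrow>
      D {app1 x3 n b} (app1 x3 n a)"
    using assms(4) unfolding neg_W_def Cn_mem by auto
  define N where "N = app1 x3 n"
  define C where "C = app2 x1 y1 c"
  define Dj where "Dj = app2 x2 y2 d"
  have NF: "a \<in> Fm ar \<Longrightarrow> N a \<in> Fm ar" for a using app1_Fm[OF nb] N_def by auto
  have CF: "a \<in> Fm ar \<Longrightarrow> b \<in> Fm ar \<Longrightarrow> C a b \<in> Fm ar" for a b using app2_Fm[OF cb] C_def by auto
  have DjF: "a \<in> Fm ar \<Longrightarrow> b \<in> Fm ar \<Longrightarrow> Dj a b \<in> Fm ar" for a b using app2_Fm[OF db] Dj_def by auto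
  have c1: "D {C a b} a" "D {C a b} b" if "a \<in> Fm ar" "b \<in> Fm ar" for a b
  proof -
    have "D {a, b} a" "D {a, b} b"
      using L_refl[OF L, of "{a,b}"] that by auto
    thus "D {C a b} a" "D {C a b} b" using Cn_eqD[OF cc[OF that]] that C_def by auto
  qed
  have c2: "D {e} (C a b)" if "a \<in> Fm ar" "b \<in> Fm ar" "D {e} a" "D {e} b" for a b e
  proof -
    have "D {C a b} (C a b)" using L_refl[OF L, of "{C a b}"] CF that by auto
    hence "D {a, b} (C a b)" using Cn_eqD[OF cc[OF that(1,2), symmetric]] CF that C_def by auto
    thus ?thesis using L_cut[OF L, of "{e}" "{a,b}"] L_fm[OF L that(3)] that by auto
  qed
  have o1: "D {Dj a b} e" if "a \<in> Fm ar" "b \<in> Fm ar" "e \<in> Fm ar" "D {a} e" "D {b} e" for a b e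
    using Cn_eqD2[OF dd[OF that(1,2)]] that Dj_def by auto
  have o2: "D {a} (Dj a b)" "D {b} (Dj a b)" if "a \<in> Fm ar" "b \<in> Fm ar" for a b
  proof -
    have "D {Dj a b} (Dj a b)" using L_refl[OF L, of "{Dj a b}"] DjF that by auto
    thus "D {a} (Dj a b)" "D {b} (Dj a b)" using Cn_eqD3[OF dd[OF that]] DjF that Dj_def by auto
  qed
  have part1: "D {Dj (N a) (N b)} (N (C a b))" if "a \<in> Fm ar" "b \<in> Fm ar" for a b
  proof (rule o1)
    show "D {N a} (N (C a b))" using nn[OF CF[OF that] that(1) c1(1)[OF that]] N_def by simp
    show "D {N b} (N (C a b))" using nn[OF CF[OF that] that(2) c1(2)[OF that]] N_def by simp
  qed (use that NF CF in auto)
  have part2: "D {N (C a b)} (Dj (N a) (N b))" if il: "neg_Il ar D x3 n" and "a \<in> Fm ar" "b \<in> Fm ar" for a b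
  proof -
    have dne: "D {N (N e)} e" if "e \<in> Fm ar" for e
    proof -
      have "e \<in> Cn ar D {e}" using L_refl[OF L, of "{e}"] that unfolding Cn_mem by auto
      moreover have "Cn ar D {e} \<subseteq> Cn ar D {N (N e)}" using il that N_def unfolding neg_Il_def by blast
      ultimately have "e \<in> Cn ar D {N (N e)}" by (rule subsetD[rotated])
      thus ?thesis unfolding Cn_mem by simp
    qed
    let ?X = "Dj (N a) (N b)"
    have XF: "?X \<in> Fm ar" using DjF NF that by auto
    have "D {N ?X} (N (N a))" using nn[OF NF XF o2(1)] that NF N_def by auto
    hence ha: "D {N ?X} a" using L_trans[OF L _ dne] that by blast
    have "D {N ?X} (N (N b))" using nn[OF NF XF o2(2)] that NF N_def by auto
    hence hb: "D {N ?X} b" using L_trans[OF L _ dne] that by blast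
    have "D {N ?X} (C a b)" using c2[OF that(2,3) ha hb] .
    hence "D {N (C a b)} (N (N ?X))" using nn[OF NF[OF XF] CF] that N_def by auto
    thus ?thesis using L_trans[OF L _ dne[OF XF]] by blast
  qed
  show ?thesis using part1 part2 unfolding N_def C_def Dj_def by blast
qed

end
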